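(* Let $\lambda>0$ and let $f$ be analytic in $\mathbb{D}=\{z:|z|<1\}$ with $f(0)=0$, $f'(0)=1$. If $|f''(z)|\le2\lambda$ for all $z\in\mathbb{D}$, then $f\in\Omega_\lambda$. The number $2\lambda$ is best possible.
   Context: $\Omega_\lambda$ denotes the set of functions $f$ analytic in $\mathbb{D}$ with $f(0)=0$, $f'(0)=1$, such that $zf'(z)-f(z)=\lambda z^2\phi(z)$ for some analytic $\phi$ on $\mathbb{D}$ with $|\phi(z)|\le1$. *)

theory Defs
  imports "HOL-Complex_Analysis.Complex_Analysis"
begin

definition Omega :: "real \<Rightarrow> (complex \<Rightarrow> complex) set" where
  "Omega lam = {f. f holomorphic_on ball 0 1 \<and> f 0 = 0 \<and> deriv f 0 = 1 \<and>
     (\<exists>\<phi>. \<phi> holomorphic_on ball 0 1 \<and> (\<forall>z\<in>ball 0 1. norm (\<phi> z) \<le> 1) \<and>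
        (\<forall>z\<in>ball 0 1. z * deriv f z - f z = of_real lam * z^2 * \<phi> z))}"

end

theory Submission
  imports Defs
begin

lemma bound_lemma:
  fixes g h :: "complex \<Rightarrow> complex" and lam :: real
  assumes dg: "\<And>w. w \<in> ball 0 1 \<Longrightarrow> (g has_field_derivative w * h w) (at w)"
    and hb: "\<And>w. w \<in> ball 0 1 \<Longrightarrow> norm (h w) \<le> 2 * lam"
    and g0: "g 0 = 0" and z: "z \<in> ball 0 1"
  shows "norm (g z) \<le> lam * norm z ^ 2"
proof -
  have inD: "of_real t * z \<in> ball 0 1" if "t \<in> {0..1}" for t :: real
  proof -
    have "norm (of_real t * z) = t * norm z" using that by (simp add: norm_mult)
    also have "\<dots> \<le> norm z" using that by (simp add: mult_left_le_one_le)
    finally show ?thesis using z by simp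
  qed
  define F where "F = (\<lambda>t::real. z * ((of_real t * z) * h (of_real t * z)))"
  have "(F has_integral (g (of_real 1 * z) - g (of_real 0 * z))) {0..1}"
    unfolding F_def
  proof (rule fundamental_theorem_of_calculus[where f = "\<lambda>t. g (of_real t * z)"])
    fix t :: real assume t: "t \<in> {0..1}"
    have d1: "((\<lambda>t. of_real t * z) has_vector_derivative z) (at t within {0..1})"
      by (auto intro!: derivative_eq_intros simp: has_vector_derivative_def scaleR_conv_of_real)
    have d2: "(g has_field_derivative (of_real t * z) * h (of_real t * z)) (at (of_real t * z) within (\<lambda>t. of_real t * z) ` {0..1})"
      using dg[OF inD[OF t]] by (rule has_field_derivative_at_within)
    from field_vector_diff_chain_within[OF d1 d2]
    show "((\<lambda>t. g (of_real t * z)) has_vector_derivative z * (of_real t * z * h (of_real t * z))) (at t within {0..1})"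
      by (simp add: o_def)
  qed simp
  hence I1: "(F has_integral g z) {0..1}" using g0 by simp
  have I2: "((\<lambda>t. 2 * lam * norm z ^ 2 * t) has_integral lam * norm z ^ 2) {0..1}"
  proof -
    have "((\<lambda>t. 2 * lam * norm z ^ 2 * t) has_integral (lam * norm z ^ 2 * 1^2 - lam * norm z ^ 2 * 0^2)) {0..1}"
      by (rule fundamental_theorem_of_calculus[where f = "\<lambda>t. lam * norm z ^ 2 * t^2"])
         (auto intro!: derivative_eq_intros simp: has_real_derivative_iff_has_vector_derivative[symmetric])
    thus ?thesis by simp
  qed
  have "norm (integral {0..1} F) \<le> integral {0..1} (\<lambda>t. 2 * lam * norm z ^ 2 * t)"
  proof (rule integral_norm_bound_integral)
    show "F integrable_on {0..1}" using I1 by blast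
    show "(\<lambda>t. 2 * lam * norm z ^ 2 * t) integrable_on {0..1}" using I2 by blast
    fix t :: real assume t: "t \<in> {0..1}"
    have "norm (F t) = norm z * (t * norm z) * norm (h (of_real t * z))"
      using t by (simp add: F_def norm_mult)
    also have "\<dots> \<le> norm z * (t * norm z) * (2 * lam)"
      using t hb[OF inD[OF t]] by (intro mult_left_mono) auto
    finally show "norm (F t) \<le> 2 * lam * norm z ^ 2 * t" by (simp add: power2_eq_square algebra_simps)
  qed
  thus ?thesis using I1 I2 by (simp add: integral_unique)
qed

theorem theorem4p3:
  fixes lam :: real
  assumes "lam > 0"
  shows "(\<forall>f. f holomorphic_on ball 0 1 \<and> f 0 = 0 \<and> deriv f 0 = 1 \<and>
            (\<forall>z\<in>ball 0 1. norm (deriv (deriv f) z) \<le> 2 * lam) \<longrightarrow> f \<in> Omega lam)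
       \<and> (\<forall>c > 2 * lam. \<exists>f. f holomorphic_on ball 0 1 \<and> f 0 = 0 \<and> deriv f 0 = 1 \<and>
            (\<forall>z\<in>ball 0 1. norm (deriv (deriv f) z) \<le> c) \<and> f \<notin> Omega lam)"
proof safe
  fix f :: "complex \<Rightarrow> complex"
  assume hf: "f holomorphic_on ball 0 1" and f0: "f 0 = 0" and f'0: "deriv f 0 = 1"
    and fb: "\<forall>z\<in>ball 0 1. norm (deriv (deriv f) z) \<le> 2 * lam"
  define D :: "complex set" where "D = ball 0 1"
  have oD: "open D" and D0: "0 \<in> D" by (auto simp: D_def)
  have hf': "deriv f holomorphic_on D" using hf oD by (auto intro: holomorphic_deriv simp: D_def)
  define g where "g = (\<lambda>z. z * deriv f z - f z)"
  have dg: "(g has_field_derivative w * deriv (deriv f) w) (at w)" if "w \<in> D" for w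
  proof -
    have d1: "(f has_field_derivative deriv f w) (at w)"
      using holomorphic_derivI[OF hf[folded D_def] oD that] .
    have d2: "(deriv f has_field_derivative deriv (deriv f) w) (at w)"
      using holomorphic_derivI[OF hf' oD that] .
    have "(g has_field_derivative (1 * deriv f w + deriv (deriv f) w * w) - deriv f w) (at w)"
      unfolding g_def by (intro DERIV_diff DERIV_mult d1 d2 DERIV_ident)
    thus ?thesis by (simp add: mult.commute)
  qed
  have g0: "g 0 = 0" using f0 by (simp add: g_def)
  have hg: "g holomorphic_on D"
    unfolding g_def using hf hf' by (auto intro!: holomorphic_intros simp: D_def)
  have gb: "norm (g z) \<le> lam * norm z ^ 2" if "z \<in> D" for z
    by (rule bound_lemma[where h = "deriv (deriv f)"]) (use dg fb g0 that in \<open>auto simp: D_def\<close>)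
  have dg0: "deriv g 0 = 0" using DERIV_imp_deriv[OF dg[OF D0]] by simp
  define g1 where "g1 = (\<lambda>z. if z = 0 then deriv g 0 else (g z - g 0) / (z - 0))"
  have hg1: "g1 holomorphic_on D" unfolding g1_def
    by (rule pole_lemma[OF hg]) (simp add: interior_open[OF oD] D0)
  define g2 where "g2 = (\<lambda>z. if z = 0 then deriv g1 0 else (g1 z - g1 0) / (z - 0))"
  have hg2: "g2 holomorphic_on D" unfolding g2_def
    by (rule pole_lemma[OF hg1]) (simp add: interior_open[OF oD] D0)
  have g2z: "g2 z = g z / z^2" if "z \<noteq> 0" for z
    using that by (simp add: g2_def g1_def dg0 g0 power2_eq_square)
  define \<phi> where "\<phi> = (\<lambda>z. g2 z / of_real lam)"
  have hphi: "\<phi> holomorphic_on D" unfolding \<phi>_def using hg2 by (auto intro!: holomorphic_intros)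
  have nb: "norm (\<phi> z) \<le> 1" if "z \<in> D" "z \<noteq> 0" for z
  proof -
    have "norm (\<phi> z) = norm (g z) / (norm z ^ 2 * lam)"
      using that assms by (simp add: \<phi>_def g2z norm_divide norm_power norm_mult)
    also have "\<dots> \<le> 1" using gb[OF that(1)] that assms by (simp add: divide_le_eq_1 mult.commute)
    finally show ?thesis .
  qed
  have nb0: "norm (\<phi> 0) \<le> 1"
  proof -
    have "isCont \<phi> 0"
      using holomorphic_on_imp_continuous_on[OF hphi] oD D0 continuous_on_eq_continuous_at by blast
    hence "(\<phi> \<longlongrightarrow> \<phi> 0) (at 0)" by (simp add: isCont_def)
    hence t: "((\<lambda>z. norm (\<phi> z)) \<longlongrightarrow> norm (\<phi> 0)) (at 0)" by (rule tendsto_norm)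
    have ev: "eventually (\<lambda>z. norm (\<phi> z) \<le> 1) (at (0::complex))"
      unfolding eventually_at
      by (rule exI[of _ 1]) (auto intro!: nb simp: D_def dist_norm)
    show ?thesis by (rule tendsto_upperbound[OF t ev]) simp
  qed
  have eq: "z * deriv f z - f z = of_real lam * z^2 * \<phi> z" if "z \<in> D" for z
  proof (cases "z = 0")
    case True thus ?thesis using f0 by simp
  next
    case False thus ?thesis using assms by (simp add: \<phi>_def g2z g_def)
  qed
  show "f \<in> Omega lam" unfolding Omega_def
    using hf f0 f'0 hphi nb nb0 eq
    by (auto simp: D_def intro!: exI[of _ \<phi>]) (metis D_def nb nb0)
next
  fix c :: real assume c: "c > 2 * lam"
  define f where "f = (\<lambda>z::complex. z + of_real (c/2) * z^2)"
  have df: "deriv f = (\<lambda>z. 1 + of_real c * z)"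
  proof
    fix z :: complex
    have "(f has_field_derivative 1 + of_real c * z) (at z)"
      unfolding f_def by (auto intro!: derivative_eq_intros simp: power2_eq_square algebra_simps)
    thus "deriv f z = 1 + of_real c * z" by (rule DERIV_imp_deriv)
  qed
  have ddf: "deriv (deriv f) = (\<lambda>z. of_real c)"
  proof
    fix z :: complex
    have "(deriv f has_field_derivative of_real c) (at z)"
      unfolding df by (auto intro!: derivative_eq_intros)
    thus "deriv (deriv f) z = of_real c" by (rule DERIV_imp_deriv)
  qed
  have nO: "f \<notin> Omega lam"
  proof
    assume "f \<in> Omega lam"
    then obtain \<phi> where nb: "\<forall>z\<in>ball 0 1. norm (\<phi> z) \<le> 1"
      and eq: "\<forall>z\<in>ball 0 1. z * deriv f z - f z = of_real lam * z^2 * \<phi> z"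
      unfolding Omega_def by blast
    have h: "(1/2::complex) \<in> ball 0 1" by simp
    have "(1/2) * deriv f (1/2) - f (1/2) = of_real lam * (1/2)^2 * \<phi> (1/2)"
      using eq h by blast
    hence "(1/2) * (1 + of_real c * (1/2)) - f (1/2) = of_real lam * (1/2)^2 * \<phi> (1/2)"
      by (simp add: df)
    hence "of_real (c/8) = of_real (lam/4) * \<phi> (1/2)"
      by (simp add: df f_def power2_eq_square algebra_simps)
    hence "\<phi> (1/2) = of_real (c / (2*lam))" using assms
      by (simp add: field_simps)
    moreover have "c > 0" using assms c by simp
    ultimately have "norm (\<phi> (1/2)) = c / (2*lam)" using assms c by (simp add: norm_divide norm_mult)
    moreover have "c / (2*lam) > 1" using assms c by simp
    moreover have "norm (\<phi> (1/2)) \<le> 1" using nb h by blast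
    ultimately show False by linarith
  qed
  show "\<exists>f. f holomorphic_on ball 0 1 \<and> f 0 = 0 \<and> deriv f 0 = 1 \<and>
            (\<forall>z\<in>ball 0 1. norm (deriv (deriv f) z) \<le> c) \<and> f \<notin> Omega lam"
    using c assms nO
    apply (intro exI[of _ f])
    apply (simp add: df ddf)
    apply (auto simp: f_def intro!: holomorphic_intros)
    done
qed

end
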